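(* For every integer $d\geq 1$, $\alpha_{\mathbb{R}}^\ast(d) = \alpha_{\mathbb{R}}(d)$, i.e. \[ \max_{ \substack{D\in\mathbb{R}^{d\times d} \text{ diagonal},\ D \succeq 0,\ \|D\|_F^2 = d } }\mathbb{E}\left[ \frac1d\sum_{k=1}^d\sigma_k(GD)\right] = \mathbb{E}\left[ \frac1d\sum_{k=1}^d\sigma_k(G)\right], \] where $G\in\mathbb{R}^{d\times d}$ has i.i.d. real $\mathcal{N}\left(0,\frac1d\right)$ entries.
   Context: $\sigma_k(A)$ denotes the $k$-th singular value of $A$. $\alpha_{\mathbb{R}}(d)=\mathbb{E}\left[\frac1d\sum_{k=1}^d\sigma_k(G)\right]$ and $\alpha^\ast_{\mathbb{R}}(d)$ is the maximum on the left-hand side, over nonnegative diagonal $D$ with $\|D\|_F^2=d$. *)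

theory Defs
  imports "HOL-Analysis.Analysis" "HOL-Probability.Probability" "HOL-Library.Multiset"
begin

definition diag_mat :: "real^'n \<Rightarrow> real^'n^'n" where
  "diag_mat s = (\<chi> i j. if i = j then s $ i else 0)"

definition singular_values :: "real^'n^'n \<Rightarrow> real multiset" where
  "singular_values A = (THE M. \<exists>U V s. orthogonal_matrix U \<and> orthogonal_matrix V \<and>
      (\<forall>i. s $ i \<ge> 0) \<and> A = U ** diag_mat s ** transpose V \<and>
      M = image_mset (\<lambda>i. s $ i) (mset_set UNIV))"

text \<open>sigma A k: the k-th largest singular value (k = 1, ..., d).\<close>
definition sigma :: "real^'n^'n \<Rightarrow> nat \<Rightarrow> real" where
  "sigma A k = rev (sorted_list_of_multiset (singular_values A)) ! (k - 1)"

text \<open>Law of a d x d matrix G with i.i.d. N(0, 1/d) entries, d = CARD('n).\<close>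
definition gauss_mat :: "(real^'n^'n) measure" where
  "gauss_mat = density lborel (\<lambda>G. ennreal (\<Prod>i\<in>UNIV. \<Prod>j\<in>UNIV.
      normal_density 0 (1 / sqrt (real CARD('n))) (G $ i $ j)))"

definition alpha_R :: "'n::finite itself \<Rightarrow> real" where
  "alpha_R _ = (\<integral>G. (1 / real CARD('n)) * (\<Sum>k=1..CARD('n). sigma (G :: real^'n^'n) k) \<partial>gauss_mat)"

definition admissible_D :: "real^'n^'n \<Rightarrow> bool" where
  "admissible_D D \<longleftrightarrow> (\<forall>i j. i \<noteq> j \<longrightarrow> D $ i $ j = 0) \<and> (\<forall>i. D $ i $ i \<ge> 0) \<and>
      (\<Sum>i\<in>UNIV. \<Sum>j\<in>UNIV. (D $ i $ j)\<^sup>2) = real CARD('n)"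

definition alpha_R_star :: "'n::finite itself \<Rightarrow> real" where
  "alpha_R_star _ = (GREATEST v. \<exists>D :: real^'n^'n. admissible_D D \<and>
      v = (\<integral>G. (1 / real CARD('n)) * (\<Sum>k=1..CARD('n). sigma (G ** D) k) \<partial>gauss_mat))"

end

theory Submission
  imports Defs
begin

definition orthonormal :: "(real^'n) set \<Rightarrow> bool" where
  "orthonormal S \<longleftrightarrow> pairwise orthogonal S \<and> (\<forall>x\<in>S. norm x = 1)"

lemma symm_dot:
  fixes A :: "real^'n^'n"
  assumes "transpose A = A"
  shows "x \<bullet> (A *v y) = (A *v x) \<bullet> y"
proof -
  have "x \<bullet> (A *v y) = (x v* A) \<bullet> y" by (simp add: dot_lmul_matrix)
  also have "x v* A = A *v x" using vector_transpose_matrix[of x A] assms by simp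
  finally show ?thesis .
qed

lemma lin_quad_zero:
  fixes c K :: real
  assumes "\<And>t. 2 * t * c \<le> t\<^sup>2 * K"
  shows "c = 0"
proof (rule ccontr)
  assume c: "c \<noteq> 0"
  define m where "m = \<bar>K\<bar> + 1"
  have p: "m > 0" unfolding m_def by simp
  define t where "t = c / m"
  have "2 * t * c \<le> t\<^sup>2 * K" by (rule assms)
  hence "2 * (c * c) / m \<le> (c * c) * K / (m * m)"
    by (simp add: t_def power2_eq_square)
  hence "2 * (c * c) * m \<le> (c * c) * K"
    using p by (simp add: field_simps)
  hence h: "(c * c) * (2 * m) \<le> (c * c) * K" by (simp add: algebra_simps)
  have cc: "c * c > 0" using c by (auto simp: zero_less_mult_iff linorder_neq_iff)
  have "2 * m \<le> K" using mult_le_cancel_left_pos[OF cc] h by blast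
  hence "2 * (\<bar>K\<bar> + 1) \<le> K" unfolding m_def .
  thus False by simp
qed

lemma eig_step:
  fixes A :: "real^'n^'n" and B :: "(real^'n) set"
  assumes sym: "transpose A = A"
    and onB: "orthonormal B"
    and eigB: "\<forall>v\<in>B. \<exists>c. A *v v = c *\<^sub>R v"
    and sp: "span B \<noteq> UNIV"
  shows "\<exists>x. norm x = 1 \<and> (\<forall>v\<in>B. orthogonal v x) \<and> (\<exists>c. A *v x = c *\<^sub>R x)"
proof -
  define S where "S = {y. \<forall>v\<in>B. orthogonal v y}"
  have subS: "subspace S" unfolding S_def by (rule subspace_orthogonal_to_vectors)
  have invS: "A *v y \<in> S" if "y \<in> S" for y
  proof -
    have "orthogonal v (A *v y)" if v: "v \<in> B" for v
    proof -
      obtain c where c: "A *v v = c *\<^sub>R v" using eigB v by blast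
      have "v \<bullet> (A *v y) = (A *v v) \<bullet> y" by (rule symm_dot[OF sym])
      also have "\<dots> = c * (v \<bullet> y)" by (simp add: c)
      also have "v \<bullet> y = 0" using \<open>y \<in> S\<close> v unfolding S_def orthogonal_def by auto
      finally show ?thesis unfolding orthogonal_def by simp
    qed
    thus ?thesis unfolding S_def by auto
  qed
  obtain a where a: "a \<noteq> 0" "\<forall>x\<in>span B. a \<bullet> x = 0"
    using span_not_UNIV_orthogonal[OF sp] by blast
  have aS: "a \<in> S" unfolding S_def orthogonal_def
    using a(2) span_base by (fastforce simp: inner_commute)
  define K where "K = S \<inter> sphere 0 1"
  have "(1 / norm a) *\<^sub>R a \<in> K" unfolding K_def using a(1) aS subS
    by (auto simp: subspace_scale)
  hence Kne: "K \<noteq> {}" by blast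
  have Kc: "compact K" unfolding K_def
    by (intro closed_Int_compact closed_subspace subS compact_sphere)
  define f where "f y = y \<bullet> (A *v y)" for y
  have fc: "continuous_on K f" unfolding f_def
    by (intro continuous_intros linear_continuous_on matrix_vector_mul_linear) 
  obtain x0 where x0: "x0 \<in> K" "\<forall>y\<in>K. f y \<le> f x0"
    using continuous_attains_sup[OF Kc Kne fc] by blast
  have x0S: "x0 \<in> S" and nx0: "norm x0 = 1" using x0(1) unfolding K_def by auto
  have x0x0: "x0 \<bullet> x0 = 1" using nx0 by (simp add: norm_eq_1)
  have crit: "y \<bullet> (A *v x0) = 0" if yS: "y \<in> S" and oy: "x0 \<bullet> y = 0" for y
  proof (rule lin_quad_zero)
    fix t :: real
    define z where "z = x0 + t *\<^sub>R y"
    have zS: "z \<in> S" unfolding z_def using subS x0S yS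
      by (simp add: subspace_add subspace_scale)
    have nz2: "z \<bullet> z = 1 + t\<^sup>2 * (y \<bullet> y)" unfolding z_def
      using x0x0 oy by (simp add: inner_add_left inner_add_right inner_commute power2_eq_square)
    have "t\<^sup>2 * (y \<bullet> y) \<ge> 0" by simp
    hence zpos: "z \<bullet> z > 0" using nz2 by linarith
    hence zne: "z \<noteq> 0" by auto
    have "(1 / norm z) *\<^sub>R z \<in> K" unfolding K_def using zS zne subS
      by (auto simp: subspace_scale)
    hence "f ((1 / norm z) *\<^sub>R z) \<le> f x0" using x0(2) by blast
    moreover have "f ((1 / norm z) *\<^sub>R z) = f z / (z \<bullet> z)"
      unfolding f_def by (simp add: matrix_vector_mult_scaleR dot_square_norm power2_eq_square)
    ultimately have "f z \<le> f x0 * (z \<bullet> z)" using zpos by (simp add: divide_le_eq)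
    moreover have "f z = f x0 + 2 * t * (y \<bullet> (A *v x0)) + t\<^sup>2 * f y"
    proof -
      have "x0 \<bullet> (A *v y) = y \<bullet> (A *v x0)"
        using symm_dot[OF sym, of x0 y] by (simp add: inner_commute)
      thus ?thesis unfolding f_def z_def
        by (simp add: matrix_vector_right_distrib matrix_vector_mult_scaleR inner_add_left
            inner_add_right power2_eq_square algebra_simps)
    qed
    ultimately show "2 * t * (y \<bullet> (A *v x0)) \<le> t\<^sup>2 * (f x0 * (y \<bullet> y) - f y)"
      using nz2 by (simp add: algebra_simps)
  qed
  define r where "r = A *v x0 - f x0 *\<^sub>R x0"
  have rS: "r \<in> S" unfolding r_def using subS invS[OF x0S] x0S
    by (simp add: subspace_diff subspace_scale)
  have "x0 \<bullet> r = 0" unfolding r_def f_def using x0x0 by (simp add: inner_diff_right)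
  hence r1: "r \<bullet> (A *v x0) = 0" using crit[OF rS] by simp
  have "r \<bullet> r = r \<bullet> (A *v x0) - f x0 * (r \<bullet> x0)" unfolding r_def
    by (simp add: inner_diff_right)
  also have "r \<bullet> x0 = 0" using \<open>x0 \<bullet> r = 0\<close> by (simp add: inner_commute)
  finally have "r = 0" using r1 by simp
  hence "A *v x0 = f x0 *\<^sub>R x0" unfolding r_def by simp
  thus ?thesis using nx0 x0S unfolding S_def by blast
qed

lemma orthonormal_finite: "orthonormal (B :: (real^'n) set) \<Longrightarrow> finite B"
  unfolding orthonormal_def using pairwise_orthogonal_imp_finite by blast

lemma extend_eig:
  fixes A :: "real^'n^'n" and B :: "(real^'n) set"
  assumes sym: "transpose A = A"
  shows "orthonormal B \<Longrightarrow> (\<forall>v\<in>B. \<exists>c. A *v v = c *\<^sub>R v) \<Longrightarrow> card B \<le> k \<Longrightarrow> k \<le> CARD('n)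
    \<Longrightarrow> \<exists>B'. B \<subseteq> B' \<and> orthonormal B' \<and> (\<forall>v\<in>B'. \<exists>c. A *v v = c *\<^sub>R v) \<and> card B' = k"
proof (induction k)
  case 0
  then show ?case by auto
next
  case (Suc k)
  show ?case
  proof (cases "card B = Suc k")
    case True
    then show ?thesis using Suc.prems by blast
  next
    case False
    hence "card B \<le> k" using Suc.prems by simp
    then obtain B1 where B1: "B \<subseteq> B1" "orthonormal B1" "\<forall>v\<in>B1. \<exists>c. A *v v = c *\<^sub>R v" "card B1 = k"
      using Suc by auto
    have fin: "finite B1" using B1(2) by (rule orthonormal_finite)
    have sp: "span B1 \<noteq> UNIV"
    proof
      assume "span B1 = UNIV"
      hence "dim (UNIV :: (real^'n) set) = dim B1" by (metis dim_span)
      also have "\<dots> \<le> k" using dim_le_card'[OF fin] B1(4) by simp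
      finally show False using Suc.prems(4) by (simp add: dim_UNIV)
    qed
    obtain x where x: "norm x = 1" "\<forall>v\<in>B1. orthogonal v x" "\<exists>c. A *v x = c *\<^sub>R x"
      using eig_step[OF sym B1(2) B1(3) sp] by blast
    have xn: "x \<notin> B1"
    proof
      assume "x \<in> B1"
      hence "orthogonal x x" using x(2) by blast
      thus False using x(1) by (simp add: orthogonal_self)
    qed
    have "orthonormal (insert x B1)"
      using B1(2) x(1,2) unfolding orthonormal_def
      by (auto intro!: pairwise_orthogonal_insert simp: orthogonal_commute)
    moreover have "card (insert x B1) = Suc k" using fin xn B1(4) by simp
    ultimately show ?thesis using B1 x by (intro exI[of _ "insert x B1"]) auto
  qed
qed

lemma orthonormal_basis_matrix:
  fixes B :: "(real^'n) set"
  assumes "orthonormal B" "card B = CARD('n)"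
  shows "\<exists>f. bij_betw f UNIV B \<and> orthogonal_matrix (\<chi> r c. f c $ r :: real^'n^'n)"
proof -
  have fin: "finite B" using assms(1) by (rule orthonormal_finite)
  obtain f where f: "bij_betw f (UNIV :: 'n set) B"
    using finite_same_card_bij[of "UNIV :: 'n set" B] fin assms(2) by auto
  have col: "column c (\<chi> r c. f c $ r :: real^'n^'n) = f c" for c
    by (simp add: column_def vec_eq_iff)
  have "orthogonal_matrix (\<chi> r c. f c $ r :: real^'n^'n)"
    unfolding orthogonal_matrix_orthonormal_columns col
  proof (intro conjI allI impI)
    fix i show "norm (f i) = 1" using f assms(1) unfolding orthonormal_def bij_betw_def by auto
  next
    fix i j :: 'n assume "i \<noteq> j"
    hence "f i \<noteq> f j" using f unfolding bij_betw_def inj_on_def by auto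
    moreover have "f i \<in> B" "f j \<in> B" using f unfolding bij_betw_def by auto
    ultimately show "orthogonal (f i) (f j)" using assms(1) unfolding orthonormal_def pairwise_def by auto
  qed
  thus ?thesis using f by blast
qed

lemma spectral:
  fixes A :: "real^'n^'n"
  assumes sym: "transpose A = A"
  shows "\<exists>V lam. orthogonal_matrix V \<and> (\<forall>c. A *v column c V = (lam $ c) *\<^sub>R column c V)"
proof -
  obtain B where B: "orthonormal B" "\<forall>v\<in>B. \<exists>c. A *v v = c *\<^sub>R v" "card B = CARD('n)"
    using extend_eig[OF sym, of "{}" "CARD('n)"] by (auto simp: orthonormal_def)
  obtain f where f: "bij_betw f UNIV B" "orthogonal_matrix (\<chi> r c. f c $ r :: real^'n^'n)"
    using orthonormal_basis_matrix[OF B(1,3)] by blast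
  define V where "V = (\<chi> r c. f c $ r :: real^'n^'n)"
  have col: "column c V = f c" for c by (simp add: V_def column_def vec_eq_iff)
  define lam where "lam = (\<chi> c. SOME mu. A *v f c = mu *\<^sub>R f c)"
  have "A *v column c V = (lam $ c) *\<^sub>R column c V" for c
  proof -
    have "f c \<in> B" using f(1) unfolding bij_betw_def by auto
    hence "\<exists>mu. A *v f c = mu *\<^sub>R f c" using B(2) by blast
    hence "A *v f c = (SOME mu. A *v f c = mu *\<^sub>R f c) *\<^sub>R f c" by (rule someI_ex)
    thus ?thesis by (simp add: col lam_def)
  qed
  thus ?thesis using f(2) unfolding V_def[symmetric] by blast
qed

lemma col_mult: "column c (A ** B) = A *v column c (B :: real^'n^'m)"
  by (simp add: column_def vec_eq_iff matrix_matrix_mult_def matrix_vector_mult_def)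

lemma col_diag: "column c (X ** diag_mat s) = (s $ c) *\<^sub>R column c (X :: real^'n^'m)"
proof -
  have "(\<Sum>k\<in>UNIV. X $ i $ k * (if k = c then s $ k else 0)) = X $ i $ c * s $ c" for i
    by (simp add: if_distrib cong: if_cong)
  thus ?thesis by (simp add: column_def vec_eq_iff matrix_matrix_mult_def diag_mat_def)
qed

lemma cols_eq: "(\<And>c. column c X = column c Y) \<Longrightarrow> X = (Y :: real^'n^'m)"
  by (simp add: column_def vec_eq_iff)

lemma dot_transpose:
  fixes A :: "real^'n^'m"
  shows "x \<bullet> (transpose A *v z) = (A *v x) \<bullet> z"
proof -
  have "x \<bullet> (transpose A *v z) = (x v* transpose A) \<bullet> z" by (rule dot_lmul_matrix[symmetric])
  thus ?thesis by (simp only: vector_transpose_matrix)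
qed

lemma orth_cols:
  fixes V :: "real^'n^'n"
  assumes "orthogonal_matrix V"
  shows "column c V \<bullet> column d V = (if c = d then 1 else 0)"
  using assms unfolding orthogonal_matrix_orthonormal_columns
  by (auto simp: orthogonal_def norm_eq_1)

lemma mat0_eig: "\<forall>v\<in>B. \<exists>c. (mat 0 :: real^'n^'n) *v v = c *\<^sub>R v"
  by (auto intro: exI[of _ 0] simp: vec_eq_iff matrix_vector_mult_def mat_def)

lemma svd_exists:
  fixes A :: "real^'n^'n"
  shows "\<exists>U V s. orthogonal_matrix U \<and> orthogonal_matrix V \<and> (\<forall>i. s $ i \<ge> 0) \<and>
           A = U ** diag_mat s ** transpose V"
proof -
  define M where "M = transpose A ** A"
  have symM: "transpose M = M" unfolding M_def by (simp add: matrix_transpose_mul)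
  obtain V lam where V: "orthogonal_matrix V" "\<And>c. M *v column c V = (lam $ c) *\<^sub>R column c V"
    using spectral[OF symM] by blast
  define v where "v c = column c V" for c
  have key: "(A *v x) \<bullet> (A *v y) = x \<bullet> (M *v y)" for x y
  proof -
    have "M *v y = transpose A *v (A *v y)" by (simp only: M_def matrix_vector_mul_assoc)
    thus ?thesis by (simp only: dot_transpose)
  qed
  have vv: "v c \<bullet> v d = (if c = d then 1 else 0)" for c d unfolding v_def by (rule orth_cols[OF V(1)])
  have V2: "M *v v c = (lam $ c) *\<^sub>R v c" for c unfolding v_def by (rule V(2))
  have Avv: "(A *v v c) \<bullet> (A *v v d) = (if c = d then lam $ d else 0)" for c d
    using vv[of c d] by (simp add: key V2)
  have lam0: "lam $ c \<ge> 0" for c using Avv[of c c] by (metis inner_ge_zero)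
  define P where "P = {c. lam $ c > 0}"
  define s where "s = (\<chi> c. sqrt (lam $ c))"
  define u where "u c = (1 / s $ c) *\<^sub>R (A *v v c)" for c
  have uu: "u c \<bullet> u d = (if c = d then 1 else 0)" if "c \<in> P" "d \<in> P" for c d
  proof -
    have "s $ c * s $ c = lam $ c" unfolding s_def using lam0[of c] by simp
    thus ?thesis using that Avv[of c d] unfolding u_def P_def by auto
  qed
  define U0 where "U0 = u ` P"
  have inju: "inj_on u P"
  proof
    fix c d assume "c \<in> P" "d \<in> P" "u c = u d"
    thus "c = d" using uu[of c d] uu[of c c] by (auto split: if_splits)
  qed
  have onU0: "orthonormal U0" unfolding orthonormal_def U0_def pairwise_def orthogonal_def
  proof (intro conjI ballI impI)
    fix x y assume "x \<in> u ` P" "y \<in> u ` P" "x \<noteq> y"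
    then obtain c d where "c \<in> P" "d \<in> P" "x = u c" "y = u d" by auto
    thus "x \<bullet> y = 0" using uu[of c d] \<open>x \<noteq> y\<close> by auto
  next
    fix x assume "x \<in> u ` P"
    then obtain c where "c \<in> P" "x = u c" by auto
    thus "norm x = 1" using uu[of c c] by (simp add: norm_eq_1)
  qed
  have cU0: "card U0 = card P" unfolding U0_def using inju by (simp add: card_image)
  have "card P \<le> CARD('n)" by (rule card_mono) auto
  moreover have tm: "transpose (mat 0 :: real^'n^'n) = mat 0" by (rule transpose_mat)
  ultimately have "\<exists>B'. U0 \<subseteq> B' \<and> orthonormal B' \<and> (\<forall>v\<in>B'. \<exists>c. (mat 0 :: real^'n^'n) *v v = c *\<^sub>R v) \<and> card B' = CARD('n)"
    using cU0 by (intro extend_eig[OF tm onU0 mat0_eig]) simp_all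
  then obtain Uf where Uf: "U0 \<subseteq> Uf" "orthonormal Uf" "card Uf = CARD('n)" by blast
  have finUf: "finite Uf" using Uf(2) by (rule orthonormal_finite)
  have "card (UNIV - P) = card (Uf - U0)"
    using cU0 Uf finUf by (simp add: card_Diff_subset finite_subset card_Diff_subset)
  then obtain g where g: "bij_betw g (UNIV - P) (Uf - U0)"
    using finite_same_card_bij[of "UNIV - P" "Uf - U0"] finUf by auto
  define u' where "u' c = (if c \<in> P then u c else g c)" for c
  have u'Uf: "u' c \<in> Uf" for c
  proof (cases "c \<in> P")
    case False
    hence "g c \<in> g ` (UNIV - P)" by blast
    thus ?thesis using g False unfolding u'_def bij_betw_def by auto
  qed (use Uf(1) in \<open>auto simp: u'_def U0_def\<close>)
  have inju': "inj u'"
  proof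
    fix c d assume eq: "u' c = u' d"
    show "c = d"
    proof (cases "c \<in> P"; cases "d \<in> P")
      assume "c \<in> P" "d \<in> P" thus ?thesis using eq inju unfolding u'_def inj_on_def by auto
    next
      assume "c \<notin> P" "d \<notin> P" thus ?thesis using eq g unfolding u'_def bij_betw_def inj_on_def by auto
    next
      assume "c \<in> P" "d \<notin> P"
      hence "u' c \<in> U0" "u' d \<notin> U0" using g unfolding u'_def U0_def bij_betw_def by auto
      thus ?thesis using eq by simp
    next
      assume "c \<notin> P" "d \<in> P"
      hence "u' d \<in> U0" "u' c \<notin> U0" using g unfolding u'_def U0_def bij_betw_def by auto
      thus ?thesis using eq by simp
    qed
  qed
  define U where "U = (\<chi> r c. u' c $ r :: real^'n^'n)"
  have colU: "column c U = u' c" for c by (simp add: U_def column_def vec_eq_iff)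
  have orthU: "orthogonal_matrix U"
    unfolding orthogonal_matrix_orthonormal_columns colU
  proof (intro conjI allI impI)
    fix i show "norm (u' i) = 1" using u'Uf Uf(2) unfolding orthonormal_def by auto
  next
    fix i j :: 'n assume "i \<noteq> j"
    hence "u' i \<noteq> u' j" using inju' unfolding inj_def by auto
    thus "orthogonal (u' i) (u' j)" using u'Uf[of i] u'Uf[of j] Uf(2)
      unfolding orthonormal_def pairwise_def by auto
  qed
  have Av: "A *v v c = (s $ c) *\<^sub>R u' c" for c
  proof (cases "c \<in> P")
    case True
    hence "s $ c > 0" unfolding s_def P_def by simp
    thus ?thesis using True unfolding u'_def u_def by simp
  next
    case False
    hence l0: "lam $ c = 0" using lam0[of c] unfolding P_def by simp
    hence "(A *v v c) \<bullet> (A *v v c) = 0" using Avv[of c c] by simp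
    hence "A *v v c = 0" by simp
    thus ?thesis using l0 unfolding s_def by simp
  qed
  have AV: "A ** V = U ** diag_mat s"
  proof (rule cols_eq)
    fix c
    have "column c (A ** V) = A *v v c" by (simp add: col_mult v_def)
    also have "\<dots> = (s $ c) *\<^sub>R u' c" by (rule Av)
    also have "\<dots> = column c (U ** diag_mat s)" by (simp only: col_diag colU)
    finally show "column c (A ** V) = column c (U ** diag_mat s)" .
  qed
  have "A = A ** (V ** transpose V)" using V(1) unfolding orthogonal_matrix_def by simp
  also have "\<dots> = U ** diag_mat s ** transpose V" by (simp add: matrix_mul_assoc AV)
  finally have "A = U ** diag_mat s ** transpose V" .
  moreover have "\<forall>i. s $ i \<ge> 0" unfolding s_def using lam0 by simp
  ultimately show ?thesis using orthU V(1) by blast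
qed

lemma entry_diag_right: "(X ** diag_mat s) $ i $ j = X $ i $ j * s $ j"
proof -
  have "(\<Sum>k\<in>UNIV. X $ i $ k * (if k = j then s $ k else 0)) = X $ i $ j * s $ j"
    by (simp add: if_distrib cong: if_cong)
  thus ?thesis by (simp add: matrix_matrix_mult_def diag_mat_def)
qed

lemma entry_mult_transpose: "(X ** transpose Y) $ i $ j = (\<Sum>k\<in>UNIV. X $ i $ k * Y $ j $ k)"
  by (simp add: matrix_matrix_mult_def transpose_def)

lemma entry_VDV: "(V ** diag_mat t ** transpose V) $ i $ j = (\<Sum>k\<in>UNIV. V $ i $ k * t $ k * V $ j $ k)"
  by (simp add: entry_mult_transpose entry_diag_right)

lemma transpose_diag: "transpose (diag_mat s) = diag_mat s"
  by (simp add: transpose_def diag_mat_def vec_eq_iff)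

lemma diag_mult: "diag_mat s ** diag_mat t = diag_mat (\<chi> i. s $ i * t $ i)"
  by (simp add: vec_eq_iff entry_diag_right) (simp add: diag_mat_def)

lemma AtA:
  fixes A U V :: "real^'n^'n"
  assumes "orthogonal_matrix U" "A = U ** diag_mat s ** transpose V"
  shows "transpose A ** A = V ** diag_mat (\<chi> i. s $ i * s $ i) ** transpose V"
proof -
  have "transpose A = V ** diag_mat s ** transpose U"
    using assms(2) by (simp add: matrix_transpose_mul transpose_diag matrix_mul_assoc)
  hence "transpose A ** A = V ** diag_mat s ** (transpose U ** U) ** diag_mat s ** transpose V"
    using assms(2) by (simp add: matrix_mul_assoc)
  also have "transpose U ** U = mat 1" using assms(1) unfolding orthogonal_matrix_def by simp
  finally show ?thesis by (simp add: matrix_mul_assoc[symmetric] diag_mult)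
qed

lemma charpoly_VDV:
  fixes V :: "real^'n^'n"
  assumes V: "orthogonal_matrix V"
  shows "det (mat x - V ** diag_mat t ** transpose V) = (\<Prod>i\<in>UNIV. x - t $ i)"
proof -
  define t' where "t' = (\<chi> i. x - t $ i)"
  have VVt: "(\<Sum>k\<in>UNIV. V $ i $ k * V $ j $ k) = (if i = j then 1 else 0)" for i j
  proof -
    have "(V ** transpose V) $ i $ j = (\<Sum>k\<in>UNIV. V $ i $ k * V $ j $ k)"
      by (simp add: matrix_matrix_mult_def transpose_def)
    thus ?thesis using V unfolding orthogonal_matrix_def by (simp add: mat_def)
  qed
  have eq: "mat x - V ** diag_mat t ** transpose V = V ** diag_mat t' ** transpose V"
  proof -
    have "(mat x - V ** diag_mat t ** transpose V) $ i $ j = (V ** diag_mat t' ** transpose V) $ i $ j" for i j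
    proof -
      have "(\<Sum>k\<in>UNIV. V $ i $ k * t' $ k * V $ j $ k)
          = x * (\<Sum>k\<in>UNIV. V $ i $ k * V $ j $ k) - (\<Sum>k\<in>UNIV. V $ i $ k * t $ k * V $ j $ k)"
        by (simp add: t'_def sum_distrib_left sum_subtractf[symmetric] algebra_simps)
      thus ?thesis by (simp add: entry_VDV VVt mat_def)
    qed
    thus ?thesis by (simp add: vec_eq_iff)
  qed
  have "det (V ** diag_mat t' ** transpose V) = det (diag_mat t') * (det V * det (transpose V))"
    by (simp add: det_mul)
  also have "det V * det (transpose V) = 1"
    using V unfolding orthogonal_matrix_def by (metis det_mul det_I)
  also have "det (diag_mat t') = (\<Prod>i\<in>UNIV. t' $ i)"
    by (subst det_diagonal) (simp_all add: diag_mat_def)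
  finally show ?thesis by (simp add: eq t'_def)
qed

lemma mset_linear_factors:
  fixes M N :: "real multiset"
  shows "prod_mset (image_mset (\<lambda>a. [:-a, 1:]) M) = prod_mset (image_mset (\<lambda>a. [:-a, 1:]) N) \<Longrightarrow> M = N"
proof (induction M arbitrary: N)
  case empty
  show ?case
  proof (rule ccontr)
    assume "{#} \<noteq> N"
    then obtain b where b: "b \<in># N" by (metis multiset_nonemptyE)
    have "poly (prod_mset (image_mset (\<lambda>a. [:-a, 1:]) N)) b = 0"
      using b by (auto simp: poly_prod_mset prod_mset_zero_iff)
    thus False using empty by simp
  qed
next
  case (add a M)
  have "poly (prod_mset (image_mset (\<lambda>a. [:-a, 1:]) (add_mset a M))) a = 0"
    by (simp add: poly_prod_mset)
  hence "poly (prod_mset (image_mset (\<lambda>a. [:-a, 1:]) N)) a = 0" by (simp only: add.prems)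
  hence "a \<in># N" by (auto simp: poly_prod_mset prod_mset_zero_iff)
  then obtain N' where N': "N = add_mset a N'" by (metis mset_add)
  have "[:-a, 1:] * prod_mset (image_mset (\<lambda>a. [:-a, 1:]) M)
      = [:-a, 1:] * prod_mset (image_mset (\<lambda>a. [:-a, 1:]) N')"
    using add.prems N' by simp
  moreover have nz: "[:-a, 1:] \<noteq> 0" by simp
  ultimately have "prod_mset (image_mset (\<lambda>a. [:-a, 1:]) M) = prod_mset (image_mset (\<lambda>a. [:-a, 1:]) N')"
    by (simp only: mult_left_cancel[OF nz])
  thus ?case using add.IH N' by simp
qed

lemma prod_eq_mset:
  fixes a b :: "real^'n"
  assumes "\<And>x. (\<Prod>i\<in>UNIV. x - a $ i) = (\<Prod>i\<in>UNIV. x - b $ i)"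
  shows "image_mset (($) a) (mset_set UNIV) = image_mset (($) b) (mset_set UNIV)"
proof -
  have pa: "poly (\<Prod>i\<in>UNIV. [:- (a $ i), 1:]) x = (\<Prod>i\<in>UNIV. x - a $ i)" for x and a :: "real^'n"
    by (simp add: poly_prod)
  have "poly (\<Prod>i\<in>UNIV. [:- (a $ i), 1:]) = poly (\<Prod>i\<in>UNIV. [:- (b $ i), 1:])"
    using assms by (simp add: pa fun_eq_iff)
  hence "(\<Prod>i\<in>UNIV. [:- (a $ i), 1:]) = (\<Prod>i\<in>UNIV. [:- (b $ i), 1:])"
    by (simp add: poly_eq_poly_eq_iff)
  hence "prod_mset (image_mset (\<lambda>c. [:-c, 1:]) (image_mset (($) a) (mset_set UNIV)))
       = prod_mset (image_mset (\<lambda>c. [:-c, 1:]) (image_mset (($) b) (mset_set UNIV)))"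
    by (simp add: prod_unfold_prod_mset image_mset.compositionality comp_def)
  thus ?thesis by (rule mset_linear_factors)
qed

lemma svd_unique:
  fixes A U V U' V' :: "real^'n^'n"
  assumes "orthogonal_matrix U" "orthogonal_matrix V" "\<forall>i. s $ i \<ge> 0" "A = U ** diag_mat s ** transpose V"
      and "orthogonal_matrix U'" "orthogonal_matrix V'" "\<forall>i. s' $ i \<ge> 0" "A = U' ** diag_mat s' ** transpose V'"
  shows "image_mset (($) s) (mset_set UNIV) = image_mset (($) s') (mset_set UNIV)"
proof -
  let ?q = "\<chi> i. s $ i * s $ i" and ?q' = "\<chi> i. s' $ i * s' $ i"
  have "(\<Prod>i\<in>UNIV. x - ?q $ i) = (\<Prod>i\<in>UNIV. x - ?q' $ i)" for x
    using charpoly_VDV[OF assms(2), of x ?q] charpoly_VDV[OF assms(6), of x ?q']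
      AtA[OF assms(1,4)] AtA[OF assms(5,8)] by simp
  hence "image_mset (($) ?q) (mset_set UNIV) = image_mset (($) ?q') (mset_set UNIV)"
    by (rule prod_eq_mset)
  hence "image_mset sqrt (image_mset (($) ?q) (mset_set UNIV)) = image_mset sqrt (image_mset (($) ?q') (mset_set UNIV))"
    by simp
  moreover have "image_mset sqrt (image_mset (($) ?q) (mset_set UNIV)) = image_mset (($) s) (mset_set UNIV)"
    using assms(3) by (simp add: image_mset.compositionality comp_def real_sqrt_mult_self cong: image_mset_cong)
  moreover have "image_mset sqrt (image_mset (($) ?q') (mset_set UNIV)) = image_mset (($) s') (mset_set UNIV)"
    using assms(7) by (simp add: image_mset.compositionality comp_def real_sqrt_mult_self cong: image_mset_cong)
  ultimately show ?thesis by simp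
qed

lemma singular_values_eq:
  fixes A U V :: "real^'n^'n"
  assumes "orthogonal_matrix U" "orthogonal_matrix V" "\<forall>i. s $ i \<ge> 0" "A = U ** diag_mat s ** transpose V"
  shows "singular_values A = image_mset (($) s) (mset_set UNIV)"
  unfolding singular_values_def
proof (rule the_equality)
  show "\<exists>U V s'. orthogonal_matrix U \<and> orthogonal_matrix V \<and> (\<forall>i. 0 \<le> s' $ i) \<and>
        A = U ** diag_mat s' ** transpose V \<and> image_mset (($) s) (mset_set UNIV) = image_mset (($) s') (mset_set UNIV)"
    using assms by blast
next
  fix M assume "\<exists>U V s'. orthogonal_matrix U \<and> orthogonal_matrix V \<and> (\<forall>i. 0 \<le> s' $ i) \<and>
        A = U ** diag_mat s' ** transpose V \<and> M = image_mset (($) s') (mset_set UNIV)"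
  then obtain U' V' s' where "orthogonal_matrix U'" "orthogonal_matrix V'" "\<forall>i. 0 \<le> s' $ i"
     "A = U' ** diag_mat s' ** transpose V'" "M = image_mset (($) s') (mset_set UNIV)" by blast
  thus "M = image_mset (($) s) (mset_set UNIV)" using svd_unique[OF assms] by metis
qed

definition Ssum :: "real^'n^'n \<Rightarrow> real" where
  "Ssum A = (\<Sum>k=1..CARD('n). sigma A k)"

lemma Ssum_svd:
  fixes A U V :: "real^'n^'n"
  assumes "orthogonal_matrix U" "orthogonal_matrix V" "\<forall>i. s $ i \<ge> 0" "A = U ** diag_mat s ** transpose V"
  shows "Ssum A = (\<Sum>i\<in>UNIV. s $ i)"
proof -
  define M where "M = singular_values A"
  have M: "M = image_mset (($) s) (mset_set UNIV)" unfolding M_def by (rule singular_values_eq[OF assms])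
  define L where "L = sorted_list_of_multiset M"
  have lenL: "length L = CARD('n)"
  proof -
    have "length L = size (mset L)" by simp
    also have "mset L = M" unfolding L_def by simp
    finally show ?thesis by (simp add: M)
  qed
  have "Ssum A = (\<Sum>k=Suc 0..CARD('n). rev L ! (k - 1))"
    by (simp add: Ssum_def sigma_def L_def M_def)
  also have "\<dots> = (\<Sum>k<CARD('n). rev L ! k)" by (simp add: sum.atLeast1_atMost_eq)
  also have "\<dots> = sum_list (rev L)"
    by (simp add: sum_list_sum_nth lenL atLeast0LessThan)
  also have "\<dots> = sum_mset M" by (simp add: L_def sum_mset_sum_list[symmetric])
  also have "\<dots> = (\<Sum>i\<in>UNIV. s $ i)" by (simp add: M sum_unfold_sum_mset)
  finally show ?thesis .
qed

lemma orth_entry_le: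
  fixes Q :: "real^'n^'n"
  assumes "orthogonal_matrix Q"
  shows "\<bar>Q $ i $ j\<bar> \<le> 1"
proof -
  have "\<bar>column j Q $ i\<bar> \<le> norm (column j Q)" by (rule component_le_norm_cart)
  also have "\<dots> = 1" using assms unfolding orthogonal_matrix_orthonormal_columns by simp
  finally show ?thesis by (simp add: column_def)
qed

lemma orth_col_sq:
  fixes Q :: "real^'n^'n"
  assumes "orthogonal_matrix Q"
  shows "(\<Sum>i\<in>UNIV. (Q $ i $ j)\<^sup>2) = 1"
proof -
  have "(transpose Q ** Q) $ j $ j = 1" using assms unfolding orthogonal_matrix_def by (simp add: mat_def)
  thus ?thesis by (simp add: matrix_matrix_mult_def transpose_def power2_eq_square)
qed

lemma trace_diag: "trace (Q ** diag_mat s) = (\<Sum>i\<in>UNIV. Q $ i $ i * s $ i)"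
  by (simp add: trace_def entry_diag_right)

lemma var_le_svd:
  fixes A U V W :: "real^'n^'n"
  assumes U: "orthogonal_matrix U" and V: "orthogonal_matrix V" and s: "\<forall>i. s $ i \<ge> 0"
    and A: "A = U ** diag_mat s ** transpose V" and W: "orthogonal_matrix W"
  shows "trace (W ** A) \<le> (\<Sum>i\<in>UNIV. s $ i)"
proof -
  define Q where "Q = transpose V ** W ** U"
  have Q: "orthogonal_matrix Q" unfolding Q_def using U V W by (simp add: orthogonal_matrix_mul)
  have "trace (W ** A) = trace ((W ** U ** diag_mat s) ** transpose V)"
    by (simp add: A matrix_mul_assoc)
  also have "\<dots> = trace (transpose V ** (W ** U ** diag_mat s))" by (rule trace_mul_sym)
  also have "\<dots> = trace (Q ** diag_mat s)" by (simp add: Q_def matrix_mul_assoc)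
  also have "\<dots> = (\<Sum>i\<in>UNIV. Q $ i $ i * s $ i)" by (rule trace_diag)
  also have "\<dots> \<le> (\<Sum>i\<in>UNIV. s $ i)"
  proof (rule sum_mono)
    fix i
    have q1: "Q $ i $ i \<le> 1" using orth_entry_le[OF Q, of i i] by simp
    show "Q $ i $ i * s $ i \<le> s $ i" using mult_right_mono[OF q1 s[rule_format, of i]] by simp
  qed
  finally show ?thesis .
qed

lemma var_eq_svd:
  fixes A U V :: "real^'n^'n"
  assumes U: "orthogonal_matrix U" and V: "orthogonal_matrix V"
    and A: "A = U ** diag_mat s ** transpose V"
  shows "trace ((V ** transpose U) ** A) = (\<Sum>i\<in>UNIV. s $ i)"
proof -
  have "(V ** transpose U) ** A = V ** (transpose U ** U) ** diag_mat s ** transpose V"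
    by (simp add: A matrix_mul_assoc)
  also have "transpose U ** U = mat 1" using U unfolding orthogonal_matrix_def by simp
  finally have "trace ((V ** transpose U) ** A) = trace ((V ** diag_mat s) ** transpose V)" by simp
  also have "\<dots> = trace (transpose V ** (V ** diag_mat s))" by (rule trace_mul_sym)
  also have "\<dots> = trace ((transpose V ** V) ** diag_mat s)" by (simp add: matrix_mul_assoc)
  also have "transpose V ** V = mat 1" using V unfolding orthogonal_matrix_def by simp
  finally show ?thesis by (simp add: trace_diag mat_def)
qed

lemma Ssum_ge:
  fixes A W :: "real^'n^'n"
  assumes "orthogonal_matrix W"
  shows "trace (W ** A) \<le> Ssum A"
proof -
  obtain U V s where svd: "orthogonal_matrix U" "orthogonal_matrix V" "\<forall>i. s $ i \<ge> 0"
      "A = U ** diag_mat s ** transpose V" using svd_exists by blast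
  show ?thesis using var_le_svd[OF svd assms] Ssum_svd[OF svd] by simp
qed

lemma Ssum_attained:
  fixes A :: "real^'n^'n"
  shows "\<exists>W. orthogonal_matrix W \<and> Ssum A = trace (W ** A)"
proof -
  obtain U V s where svd: "orthogonal_matrix U" "orthogonal_matrix V" "\<forall>i. s $ i \<ge> 0"
      "A = U ** diag_mat s ** transpose V" using svd_exists by blast
  have "orthogonal_matrix (V ** transpose U)" using svd(1,2) by (simp add: orthogonal_matrix_mul)
  thus ?thesis using var_eq_svd[OF svd(1,2,4)] Ssum_svd[OF svd] by metis
qed

lemma Ssum_nonneg: "0 \<le> Ssum (A :: real^'n^'n)"
proof -
  obtain U V s where svd: "orthogonal_matrix U" "orthogonal_matrix V" "\<forall>i. s $ i \<ge> 0"
      "A = U ** diag_mat s ** transpose V" using svd_exists by blast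
  show ?thesis using Ssum_svd[OF svd] svd(3) by (simp add: sum_nonneg)
qed

lemma Ssum_right_orth:
  fixes A Q :: "real^'n^'n"
  assumes Q: "orthogonal_matrix Q"
  shows "Ssum (A ** Q) = Ssum A"
proof (rule antisym)
  obtain W where W: "orthogonal_matrix W" "Ssum (A ** Q) = trace (W ** (A ** Q))"
    using Ssum_attained by blast
  have "trace (W ** (A ** Q)) = trace ((W ** A) ** Q)" by (simp add: matrix_mul_assoc)
  also have "\<dots> = trace (Q ** (W ** A))" by (rule trace_mul_sym)
  also have "\<dots> = trace ((Q ** W) ** A)" by (simp add: matrix_mul_assoc)
  also have "\<dots> \<le> Ssum A" using Q W(1) by (intro Ssum_ge orthogonal_matrix_mul)
  finally show "Ssum (A ** Q) \<le> Ssum A" using W(2) by simp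
next
  obtain W where W: "orthogonal_matrix W" "Ssum A = trace (W ** A)"
    using Ssum_attained by blast
  have "A = A ** Q ** transpose Q" using Q unfolding orthogonal_matrix_def
    by (simp add: matrix_mul_assoc[symmetric])
  hence "trace (W ** A) = trace ((W ** (A ** Q)) ** transpose Q)" by (metis matrix_mul_assoc)
  also have "\<dots> = trace (transpose Q ** (W ** (A ** Q)))" by (rule trace_mul_sym)
  also have "\<dots> = trace ((transpose Q ** W) ** (A ** Q))" by (simp add: matrix_mul_assoc)
  also have "\<dots> \<le> Ssum (A ** Q)" using Q W(1) by (intro Ssum_ge orthogonal_matrix_mul) simp_all
  finally show "Ssum A \<le> Ssum (A ** Q)" using W(2) by simp
qed

lemma trace_orth_bound:
  fixes W M :: "real^'n^'n"
  assumes "orthogonal_matrix W"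
  shows "trace (W ** M) \<le> (\<Sum>i\<in>UNIV. \<Sum>k\<in>UNIV. \<bar>M $ k $ i\<bar>)"
proof -
  have "trace (W ** M) = (\<Sum>i\<in>UNIV. \<Sum>k\<in>UNIV. W $ i $ k * M $ k $ i)"
    by (simp add: trace_def matrix_matrix_mult_def)
  also have "\<dots> \<le> (\<Sum>i\<in>UNIV. \<Sum>k\<in>UNIV. \<bar>M $ k $ i\<bar>)"
  proof (intro sum_mono)
    fix i k
    have "W $ i $ k * M $ k $ i \<le> \<bar>W $ i $ k\<bar> * \<bar>M $ k $ i\<bar>" by (simp add: abs_mult[symmetric])
    also have "\<dots> \<le> 1 * \<bar>M $ k $ i\<bar>" using orth_entry_le[OF assms] by (intro mult_right_mono) auto
    finally show "W $ i $ k * M $ k $ i \<le> \<bar>M $ k $ i\<bar>" by simp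
  qed
  finally show ?thesis .
qed

lemma Ssum_le_l1: "Ssum (A :: real^'n^'n) \<le> (\<Sum>i\<in>UNIV. \<Sum>k\<in>UNIV. \<bar>A $ k $ i\<bar>)"
  using Ssum_attained[of A] trace_orth_bound by metis

lemma Ssum_lip:
  fixes A B :: "real^'n^'n"
  shows "\<bar>Ssum A - Ssum B\<bar> \<le> (\<Sum>i\<in>UNIV. \<Sum>k\<in>UNIV. \<bar>(A - B) $ k $ i\<bar>)"
proof -
  have 1: "Ssum A - Ssum B \<le> (\<Sum>i\<in>UNIV. \<Sum>k\<in>UNIV. \<bar>(A - B) $ k $ i\<bar>)" for A B :: "real^'n^'n"
  proof -
    obtain W where W: "orthogonal_matrix W" "Ssum A = trace (W ** A)" using Ssum_attained by blast
    have "trace (W ** A) = trace (W ** B) + trace (W ** (A - B))"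
      by (simp add: trace_def matrix_matrix_mult_def right_diff_distrib sum_subtractf)
    moreover have "trace (W ** B) \<le> Ssum B" by (rule Ssum_ge[OF W(1)])
    moreover have "trace (W ** (A - B)) \<le> (\<Sum>i\<in>UNIV. \<Sum>k\<in>UNIV. \<bar>(A - B) $ k $ i\<bar>)"
      by (rule trace_orth_bound[OF W(1)])
    ultimately show ?thesis using W(2) by linarith
  qed
  have "Ssum B - Ssum A \<le> (\<Sum>i\<in>UNIV. \<Sum>k\<in>UNIV. \<bar>(A - B) $ k $ i\<bar>)"
    using 1[of B A] by (simp add: abs_minus_commute)
  thus ?thesis using 1[of A B] by linarith
qed

lemma entry_QDV: "(Q ** diag_mat s ** transpose V) $ j $ l = (\<Sum>k\<in>UNIV. Q $ j $ k * s $ k * V $ l $ k)"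
  by (simp add: entry_mult_transpose entry_diag_right)

lemma key_ineq:
  fixes G U V :: "real^'n^'n"
  assumes U: "orthogonal_matrix U" and V: "orthogonal_matrix V" and s: "\<forall>i. s $ i \<ge> 0"
    and G: "G = U ** diag_mat s ** transpose V"
  shows "Ssum (G ** diag_mat d) \<le>
    ((\<Sum>i\<in>UNIV. s $ i) + (\<Sum>j\<in>UNIV. \<Sum>i\<in>UNIV. s $ i * (V $ j $ i)\<^sup>2 * (d $ j)\<^sup>2)) / 2"
proof -
  obtain W where W: "orthogonal_matrix W" "Ssum (G ** diag_mat d) = trace (W ** (G ** diag_mat d))"
    using Ssum_attained by blast
  define Q where "Q = W ** U"
  have Q: "orthogonal_matrix Q" unfolding Q_def using W(1) U by (rule orthogonal_matrix_mul)
  have "W ** (G ** diag_mat d) = (Q ** diag_mat s ** transpose V) ** diag_mat d"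
    by (simp add: G Q_def matrix_mul_assoc)
  hence "trace (W ** (G ** diag_mat d)) = (\<Sum>j\<in>UNIV. (\<Sum>i\<in>UNIV. Q $ j $ i * s $ i * V $ j $ i) * d $ j)"
    by (simp add: trace_diag entry_QDV)
  also have "\<dots> = (\<Sum>j\<in>UNIV. \<Sum>i\<in>UNIV. s $ i * (Q $ j $ i * (V $ j $ i * d $ j)))"
    by (simp add: sum_distrib_right sum_distrib_left algebra_simps)
  also have "\<dots> \<le> (\<Sum>j\<in>UNIV. \<Sum>i\<in>UNIV. s $ i * (((Q $ j $ i)\<^sup>2 + (V $ j $ i * d $ j)\<^sup>2) / 2))"
  proof (intro sum_mono mult_left_mono)
    fix j i
    show "Q $ j $ i * (V $ j $ i * d $ j) \<le> ((Q $ j $ i)\<^sup>2 + (V $ j $ i * d $ j)\<^sup>2) / 2"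
      using sum_squares_bound[of "Q $ j $ i" "V $ j $ i * d $ j"] by simp
    show "0 \<le> s $ i" using s by simp
  qed
  also have "\<dots> = ((\<Sum>j\<in>UNIV. \<Sum>i\<in>UNIV. s $ i * (Q $ j $ i)\<^sup>2)
        + (\<Sum>j\<in>UNIV. \<Sum>i\<in>UNIV. s $ i * (V $ j $ i)\<^sup>2 * (d $ j)\<^sup>2)) / 2"
  proof -
    have "s $ i * (((Q $ j $ i)\<^sup>2 + (V $ j $ i * d $ j)\<^sup>2) / 2)
        = (s $ i * (Q $ j $ i)\<^sup>2 + s $ i * (V $ j $ i)\<^sup>2 * (d $ j)\<^sup>2) / 2" for i j
      by (simp add: power_mult_distrib algebra_simps)
    thus ?thesis by (simp add: sum.distrib sum_divide_distrib[symmetric])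
  qed
  also have "(\<Sum>j\<in>UNIV. \<Sum>i\<in>UNIV. s $ i * (Q $ j $ i)\<^sup>2) = (\<Sum>i\<in>UNIV. s $ i * (\<Sum>j\<in>UNIV. (Q $ j $ i)\<^sup>2))"
    by (subst sum.swap) (simp add: sum_distrib_left)
  also have "(\<Sum>i\<in>UNIV. s $ i * (\<Sum>j\<in>UNIV. (Q $ j $ i)\<^sup>2)) = (\<Sum>i\<in>UNIV. s $ i)"
    by (simp add: orth_col_sq[OF Q])
  finally show ?thesis using W(2) by simp
qed

lemma averaging:
  fixes G :: "real^'n^'n" and d :: "real^'n" and r :: "'k \<Rightarrow> 'n \<Rightarrow> 'n"
  assumes fin: "finite K" and r: "\<And>j. bij_betw (\<lambda>k. r k j) K UNIV"
    and dn: "(\<Sum>j\<in>UNIV. (d $ j)\<^sup>2) = real (card K)"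
  shows "(\<Sum>k\<in>K. Ssum (G ** diag_mat (\<chi> j. d $ (r k j)))) \<le> real (card K) * Ssum G"
proof -
  obtain U V s where svd: "orthogonal_matrix U" "orthogonal_matrix V" "\<forall>i. s $ i \<ge> 0"
      "G = U ** diag_mat s ** transpose V" using svd_exists by blast
  have "(\<Sum>k\<in>K. Ssum (G ** diag_mat (\<chi> j. d $ (r k j)))) \<le>
      (\<Sum>k\<in>K. ((\<Sum>i\<in>UNIV. s $ i) + (\<Sum>j\<in>UNIV. \<Sum>i\<in>UNIV. s $ i * (V $ j $ i)\<^sup>2 * (d $ (r k j))\<^sup>2)) / 2)"
    by (intro sum_mono order.trans[OF key_ineq[OF svd]]) simp
  also have "\<dots> = (real (card K) * (\<Sum>i\<in>UNIV. s $ i)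
        + (\<Sum>j\<in>UNIV. \<Sum>i\<in>UNIV. s $ i * (V $ j $ i)\<^sup>2 * (\<Sum>k\<in>K. (d $ (r k j))\<^sup>2))) / 2"
  proof -
    have "(\<Sum>k\<in>K. (\<Sum>j\<in>UNIV. \<Sum>i\<in>UNIV. s $ i * (V $ j $ i)\<^sup>2 * (d $ (r k j))\<^sup>2))
        = (\<Sum>j\<in>UNIV. \<Sum>k\<in>K. \<Sum>i\<in>UNIV. s $ i * (V $ j $ i)\<^sup>2 * (d $ (r k j))\<^sup>2)"
      by (rule sum.swap)
    also have "\<dots> = (\<Sum>j\<in>UNIV. \<Sum>i\<in>UNIV. \<Sum>k\<in>K. s $ i * (V $ j $ i)\<^sup>2 * (d $ (r k j))\<^sup>2)"
      by (intro sum.cong refl sum.swap)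
    also have "\<dots> = (\<Sum>j\<in>UNIV. \<Sum>i\<in>UNIV. s $ i * (V $ j $ i)\<^sup>2 * (\<Sum>k\<in>K. (d $ (r k j))\<^sup>2))"
      by (simp add: sum_distrib_left)
    finally have e: "(\<Sum>k\<in>K. (\<Sum>j\<in>UNIV. \<Sum>i\<in>UNIV. s $ i * (V $ j $ i)\<^sup>2 * (d $ (r k j))\<^sup>2))
        = (\<Sum>j\<in>UNIV. \<Sum>i\<in>UNIV. s $ i * (V $ j $ i)\<^sup>2 * (\<Sum>k\<in>K. (d $ (r k j))\<^sup>2))" .
    show ?thesis by (simp add: sum_divide_distrib[symmetric] sum.distrib e)
  qed
  also have "(\<lambda>j. \<Sum>k\<in>K. (d $ (r k j))\<^sup>2) = (\<lambda>j. real (card K))"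
  proof
    fix j
    have "(\<Sum>k\<in>K. (d $ (r k j))\<^sup>2) = (\<Sum>m\<in>UNIV. (d $ m)\<^sup>2)"
      using sum.reindex_bij_betw[OF r[of j], of "\<lambda>m. (d $ m)\<^sup>2"] by simp
    thus "(\<Sum>k\<in>K. (d $ (r k j))\<^sup>2) = real (card K)" using dn by simp
  qed
  also have "(\<Sum>j\<in>UNIV. \<Sum>i\<in>UNIV. s $ i * (V $ j $ i)\<^sup>2 * real (card K))
      = real (card K) * (\<Sum>i\<in>UNIV. s $ i * (\<Sum>j\<in>UNIV. (V $ j $ i)\<^sup>2))"
    by (subst sum.swap) (simp add: sum_distrib_left sum_distrib_right algebra_simps)
  also have "(\<Sum>i\<in>UNIV. s $ i * (\<Sum>j\<in>UNIV. (V $ j $ i)\<^sup>2)) = (\<Sum>i\<in>UNIV. s $ i)"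
    by (simp add: orth_col_sq[OF svd(2)])
  finally show ?thesis using Ssum_svd[OF svd] by simp
qed

lemma meas_entry[measurable]: "(\<lambda>G::real^'n^'m. G $ i $ j) \<in> borel_measurable borel"
  by (intro borel_measurable_continuous_onI continuous_on_component continuous_on_id)

lemma Basis_mat: "(Basis :: (real^'n^'m) set) = (\<lambda>(i, j). axis i (axis j 1)) ` UNIV"
  by (auto simp: Basis_vec_def)

lemma inner_axis2: "(x :: real^'n^'m) \<bullet> axis i (axis j 1) = x $ i $ j"
  by (simp add: inner_axis)

lemma mem_box_mat:
  fixes x a b :: "real^'n^'m"
  shows "x \<in> box a b \<longleftrightarrow> (\<forall>i j. a $ i $ j < x $ i $ j \<and> x $ i $ j < b $ i $ j)"
  by (simp add: mem_box Basis_mat inner_axis2)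

lemma inj_axis2: "inj (\<lambda>(i, j). (axis i (axis j (1::real)) :: real^'n^'m))"
  by (auto simp: inj_def axis_eq_axis)

lemma prod_Basis_mat:
  fixes f :: "real^'n^'m \<Rightarrow> 'a::comm_monoid_mult"
  shows "(\<Prod>b\<in>Basis. f b) = (\<Prod>i\<in>UNIV. \<Prod>j\<in>UNIV. f (axis i (axis j 1)))"
proof -
  have "(\<Prod>b\<in>Basis. f b) = (\<Prod>p\<in>UNIV. f ((\<lambda>(i, j). axis i (axis j 1)) p))"
    unfolding Basis_mat by (subst prod.reindex[OF inj_axis2]) (simp add: comp_def)
  also have "\<dots> = (\<Prod>(i, j)\<in>UNIV \<times> UNIV. f (axis i (axis j 1)))"
    by (simp add: case_prod_beta)
  also have "\<dots> = (\<Prod>i\<in>UNIV. \<Prod>j\<in>UNIV. f (axis i (axis j 1)))"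
    by (rule prod.cartesian_product[symmetric])
  finally show ?thesis .
qed

definition permc :: "('n \<Rightarrow> 'n) \<Rightarrow> real^'n^'m \<Rightarrow> real^'n^'m" where
  "permc q G = (\<chi> i j. G $ i $ (q j))"

lemma permc_cont: "continuous_on UNIV (permc q)"
  unfolding permc_def
  by (intro continuous_on_vec_lambda continuous_on_component continuous_on_id)

lemma permc_meas[measurable]: "permc q \<in> borel_measurable borel"
  by (rule borel_measurable_continuous_onI[OF permc_cont])

lemma lborel_permc:
  assumes q: "bij q"
  shows "distr lborel borel (permc q) = (lborel :: (real^'n^'m) measure)"
proof (rule lborel_eqI[symmetric])
  fix l u :: "real^'n^'m"
  assume le: "\<And>b. b \<in> Basis \<Longrightarrow> l \<bullet> b \<le> u \<bullet> b"
  define qi where "qi = inv q"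
  have qqi: "q (qi m) = m" for m unfolding qi_def using q by (simp add: bij_is_surj surj_f_inv_f)
  have qiq: "qi (q m) = m" for m unfolding qi_def using q by (simp add: bij_is_inj inv_f_f)
  define l' where "l' = (\<chi> i j. l $ i $ (qi j) :: real^'n^'m)"
  define u' where "u' = (\<chi> i j. u $ i $ (qi j) :: real^'n^'m)"
  have pre: "permc q -` box l u = box l' u'"
  proof (intro set_eqI iffI)
    fix G assume "G \<in> permc q -` box l u"
    hence h: "l $ i $ j < G $ i $ (q j) \<and> G $ i $ (q j) < u $ i $ j" for i j
      by (auto simp: mem_box_mat permc_def)
    show "G \<in> box l' u'" unfolding mem_box_mat l'_def u'_def
      using h[of _ "qi _"] by (simp add: qqi)
  next
    fix G assume "G \<in> box l' u'"
    hence h: "l $ i $ (qi j) < G $ i $ j \<and> G $ i $ j < u $ i $ (qi j)" for i j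
      by (auto simp: mem_box_mat l'_def u'_def)
    have "permc q G \<in> box l u" unfolding mem_box_mat permc_def
      using h[of _ "q _"] by (simp add: qiq)
    thus "G \<in> permc q -` box l u" by simp
  qed
  have le': "l' \<bullet> b \<le> u' \<bullet> b" if "b \<in> Basis" for b
  proof -
    have "b \<in> (\<lambda>(i, j). axis i (axis j 1)) ` (UNIV :: ('m \<times> 'n) set)"
      using that by (simp only: Basis_mat)
    then obtain i j where b: "b = axis i (axis j 1)" by auto
    have "l \<bullet> axis i (axis (qi j) 1) \<le> u \<bullet> axis i (axis (qi j) 1)"
      by (intro le) (auto simp: Basis_vec_def)
    thus ?thesis by (simp add: b inner_axis2 l'_def u'_def)
  qed
  have "emeasure (distr lborel borel (permc q)) (box l u) = emeasure lborel (permc q -` box l u)"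
    by (subst emeasure_distr) auto
  also have "\<dots> = emeasure lborel (box l' u')" by (simp add: pre)
  also have "\<dots> = ennreal (\<Prod>b\<in>Basis. (u' - l') \<bullet> b)"
    using le' by (simp add: emeasure_lborel_box_eq)
  also have "(\<Prod>b\<in>Basis. (u' - l') \<bullet> b) = (\<Prod>i\<in>UNIV. \<Prod>j\<in>UNIV. (u $ i $ (qi j) - l $ i $ (qi j)))"
    by (simp add: prod_Basis_mat inner_axis2 l'_def u'_def)
  also have "\<dots> = (\<Prod>i\<in>UNIV. \<Prod>j\<in>UNIV. (u $ i $ j - l $ i $ j))"
  proof (rule prod.cong[OF refl])
    fix i
    have "bij qi" unfolding qi_def using q by (rule bij_imp_bij_inv)
    thus "(\<Prod>j\<in>UNIV. u $ i $ (qi j) - l $ i $ (qi j)) = (\<Prod>j\<in>UNIV. u $ i $ j - l $ i $ j)"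
      by (rule prod.reindex_bij_betw)
  qed
  also have "\<dots> = (\<Prod>b\<in>Basis. (u - l) \<bullet> b)"
    by (simp add: prod_Basis_mat inner_axis2)
  finally show "emeasure (distr lborel borel (permc q)) (box l u) = (\<Prod>b\<in>Basis. (u - l) \<bullet> b)" .
qed simp

definition gdens :: "real^'n^'n \<Rightarrow> real" where
  "gdens G = (\<Prod>i\<in>UNIV. \<Prod>j\<in>UNIV. normal_density 0 (1 / sqrt (real CARD('n))) (G $ i $ j))"

lemma gdens_meas[measurable]: "gdens \<in> borel_measurable borel"
  unfolding gdens_def by measurable

lemma gdens_nonneg: "0 \<le> gdens G"
  unfolding gdens_def by (intro prod_nonneg) simp

lemma gauss_density: "gauss_mat = density lborel (\<lambda>G. ennreal (gdens G))"
  unfolding gauss_mat_def gdens_def ..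

lemma gdens_permc:
  assumes q: "bij q"
  shows "gdens (permc q G) = gdens G"
  unfolding gdens_def permc_def
proof (simp, rule prod.cong[OF refl])
  fix i
  show "(\<Prod>j\<in>UNIV. normal_density 0 (1 / sqrt (real CARD('n))) (G $ i $ q j)) =
        (\<Prod>j\<in>UNIV. normal_density 0 (1 / sqrt (real CARD('n))) (G $ i $ j))"
    using prod.reindex_bij_betw[OF q, of "\<lambda>j. normal_density 0 (1 / sqrt (real CARD('n))) (G $ i $ j)"]
    by simp
qed

lemma gauss_inv:
  fixes f :: "real^'n^'n \<Rightarrow> real"
  assumes q: "bij q" and f[measurable]: "f \<in> borel_measurable borel"
  shows "(\<integral>G. f (permc q G) \<partial>gauss_mat) = (\<integral>G. f G \<partial>gauss_mat)"
proof -
  have "(\<integral>G. f (permc q G) \<partial>gauss_mat) = (\<integral>G. gdens G * f (permc q G) \<partial>lborel)"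
    unfolding gauss_density by (subst integral_density) (auto simp: gdens_nonneg)
  also have "\<dots> = (\<integral>G. gdens (permc q G) * f (permc q G) \<partial>lborel)"
    by (simp add: gdens_permc[OF q])
  also have "\<dots> = (\<integral>H. gdens H * f H \<partial>(distr lborel borel (permc q)))"
    by (subst integral_distr) auto
  also have "\<dots> = (\<integral>H. gdens H * f H \<partial>lborel)" by (simp add: lborel_permc[OF q])
  also have "\<dots> = (\<integral>G. f G \<partial>gauss_mat)"
    unfolding gauss_density by (subst integral_density) (auto simp: gdens_nonneg)
  finally show ?thesis .
qed

definition Pbound :: "real^'n^'n \<Rightarrow> real" where
  "Pbound G = (\<Prod>i\<in>UNIV. \<Prod>j\<in>UNIV. 1 + \<bar>G $ i $ j\<bar>)"

lemma Pbound_meas[measurable]: "Pbound \<in> borel_measurable borel"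
  unfolding Pbound_def by measurable

lemma one_le_Pbound: "1 \<le> Pbound G"
  unfolding Pbound_def by (intro prod_ge_1) auto

lemma prod_ge_factor:
  fixes f :: "'a \<Rightarrow> real"
  assumes "finite A" "a \<in> A" "\<And>x. x \<in> A \<Longrightarrow> 1 \<le> f x"
  shows "f a \<le> prod f A"
proof -
  have "prod f A = f a * prod f (A - {a})" using assms(1,2) by (rule prod.remove)
  moreover have "1 \<le> prod f (A - {a})" using assms(3) by (intro prod_ge_1) auto
  moreover have "0 \<le> f a" using assms(2,3) by (smt (verit))
  ultimately show ?thesis by (metis mult_left_mono mult.right_neutral)
qed

lemma entry_le_Pbound: "\<bar>G $ i $ j\<bar> \<le> Pbound G"
proof -
  have "1 + \<bar>G $ i $ j\<bar> \<le> (\<Prod>j\<in>UNIV. 1 + \<bar>G $ i $ j\<bar>)"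
    by (rule prod_ge_factor) auto
  also have "\<dots> \<le> Pbound G" unfolding Pbound_def
    by (rule prod_ge_factor) (auto intro: prod_ge_1)
  finally show ?thesis by simp
qed

lemma integrable_Pbound: "integrable (gauss_mat :: (real^'n^'n) measure) Pbound"
proof -
  let ?s = "1 / sqrt (real CARD('n))"
  define h where "h x = normal_density 0 ?s x * (1 + \<bar>x\<bar>)" for x
  have hint: "integrable lborel h"
  proof -
    have "integrable lborel (\<lambda>x. normal_density 0 ?s x + normal_density 0 ?s x * \<bar>x - 0\<bar> ^ 1)"
      using integrable_normal_moment_abs[of ?s 0 1]
      by (intro Bochner_Integration.integrable_add integrable_normal_density) auto
    thus ?thesis unfolding h_def by (simp add: algebra_simps)
  qed
  have hnn: "0 \<le> h x" for x unfolding h_def by simp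
  have hm[measurable]: "h \<in> borel_measurable borel" unfolding h_def by measurable
  have eq: "ennreal (gdens G * Pbound G) = (\<Prod>b\<in>Basis. ennreal (h (G \<bullet> b)))" for G :: "real^'n^'n"
  proof -
    have "gdens G * Pbound G = (\<Prod>i\<in>UNIV. \<Prod>j\<in>UNIV. h (G $ i $ j))"
      unfolding gdens_def Pbound_def h_def by (simp add: prod.distrib)
    also have "\<dots> = (\<Prod>b\<in>Basis. h (G \<bullet> b))" by (simp add: prod_Basis_mat inner_axis2)
    finally show ?thesis by (simp add: prod_ennreal hnn)
  qed
  have "(\<integral>\<^sup>+G. ennreal (gdens G * Pbound G) \<partial>(lborel :: (real^'n^'n) measure)) = (\<integral>\<^sup>+G. (\<Prod>b\<in>Basis. ennreal (h (G \<bullet> b))) \<partial>(lborel :: (real^'n^'n) measure))"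
    by (intro nn_integral_cong) (rule eq)
  also have "\<dots> = (\<Prod>b\<in>(Basis :: (real^'n^'n) set). \<integral>\<^sup>+x. ennreal (h x) \<partial>lborel)"
    by (rule nn_integral_lborel_prod) auto
  also have "\<dots> = (\<Prod>b\<in>(Basis :: (real^'n^'n) set). ennreal (\<integral>x. h x \<partial>lborel))"
    by (simp add: nn_integral_eq_integral[OF hint] hnn)
  also have "\<dots> = ennreal (\<Prod>b\<in>(Basis :: (real^'n^'n) set). (\<integral>x. h x \<partial>lborel))"
    by (rule prod_ennreal) (simp add: integral_nonneg_AE hnn)
  also have "\<dots> < \<infinity>" by simp
  finally have fin: "(\<integral>\<^sup>+G. ennreal (gdens G * Pbound G) \<partial>(lborel :: (real^'n^'n) measure)) < \<infinity>" .
  have "integrable (lborel :: (real^'n^'n) measure) (\<lambda>G. gdens G * Pbound G)"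
    by (rule integrableI_nonneg[OF _ _ fin]) (auto simp: gdens_nonneg intro!: mult_nonneg_nonneg order.trans[OF zero_le_one one_le_Pbound])
  thus ?thesis unfolding gauss_density
    by (subst integrable_density) (auto simp: gdens_nonneg)
qed

lemma entry_le_norm: "\<bar>M $ k $ i\<bar> \<le> norm (M :: real^'n^'m)"
  using component_le_norm_cart[of "M $ k" i] Finite_Cartesian_Product.norm_nth_le[of M k] by linarith

lemma Ssum_cont: "continuous_on UNIV (Ssum :: real^'n^'n \<Rightarrow> real)"
proof (rule lipschitz_on_continuous_on)
  show "(real CARD('n) * real CARD('n))-lipschitz_on UNIV (Ssum :: real^'n^'n \<Rightarrow> real)"
  proof (rule lipschitz_onI)
    fix A B :: "real^'n^'n"
    have "dist (Ssum A) (Ssum B) = \<bar>Ssum A - Ssum B\<bar>" by (simp add: dist_real_def)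
    also have "\<dots> \<le> (\<Sum>i\<in>UNIV. \<Sum>k\<in>UNIV. \<bar>(A - B) $ k $ i\<bar>)" by (rule Ssum_lip)
    also have "\<dots> \<le> (\<Sum>i\<in>(UNIV::'n set). \<Sum>k\<in>(UNIV::'n set). norm (A - B))"
      by (intro sum_mono entry_le_norm)
    also have "\<dots> = real CARD('n) * real CARD('n) * dist A B" by (simp add: dist_norm)
    finally show "dist (Ssum A) (Ssum B) \<le> real CARD('n) * real CARD('n) * dist A B" .
  qed simp
qed

lemma Ssum_meas[measurable]: "Ssum \<in> borel_measurable (borel :: (real^'n^'n) measure)"
  by (rule borel_measurable_continuous_onI[OF Ssum_cont])

lemma mult_right_cont: "continuous_on UNIV (\<lambda>G :: real^'n^'m. G ** (D :: real^'k^'n))"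
  unfolding matrix_matrix_mult_def
  by (intro continuous_on_vec_lambda continuous_intros continuous_on_component continuous_on_id)

lemma Ssum_mult_meas[measurable]: "(\<lambda>G. Ssum (G ** D)) \<in> borel_measurable (borel :: (real^'n^'n) measure)"
proof -
  have "continuous_on UNIV (\<lambda>G :: real^'n^'n. Ssum (G ** D))"
    by (rule continuous_on_compose2[OF Ssum_cont mult_right_cont]) auto
  thus ?thesis by (rule borel_measurable_continuous_onI)
qed

subsection \<open>Permutation matrices\<close>

definition pmat :: "('n \<Rightarrow> 'n) \<Rightarrow> real^'n^'n" where
  "pmat q = (\<chi> a b. if a = q b then 1 else 0)"

lemma permc_pmat: "permc q X = X ** pmat q"
proof -
  have "(\<Sum>a\<in>UNIV. X $ i $ a * (if a = q j then 1 else 0)) = X $ i $ q j" for i j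
    by (simp add: if_distrib cong: if_cong)
  thus ?thesis by (simp add: permc_def pmat_def matrix_matrix_mult_def vec_eq_iff)
qed

lemma pmat_orth:
  assumes "inj q"
  shows "orthogonal_matrix (pmat q)"
proof -
  have col: "column b (pmat q) = axis (q b) 1" for b
    by (simp add: column_def pmat_def axis_def vec_eq_iff)
  show ?thesis unfolding orthogonal_matrix_orthonormal_columns col
    using assms by (auto simp: orthogonal_def inner_axis_axis inj_def)
qed

lemma permc_diag:
  assumes q: "bij q"
  shows "permc q G ** diag_mat d = permc q (G ** diag_mat (\<chi> m. d $ (inv q m)))"
proof -
  have "inv q (q j) = j" for j using q by (simp add: bij_is_inj inv_f_f)
  thus ?thesis by (simp add: permc_def vec_eq_iff entry_diag_right)
qed

lemma Ssum_permc_diag: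
  assumes q: "bij q"
  shows "Ssum (permc q G ** diag_mat d) = Ssum (G ** diag_mat (\<chi> m. d $ (inv q m)))"
  using permc_diag[OF q] permc_pmat Ssum_right_orth[OF pmat_orth[OF bij_is_inj[OF q]]] by metis

subsection \<open>A Latin square on a finite type\<close>

lemma mod_cancel_lt:
  fixes a b c n :: nat
  assumes h: "(a + c) mod n = (b + c) mod n" and a: "a < n" and b: "b < n"
  shows "a = b"
proof -
  have hi: "(int a + int c) mod int n = (int b + int c) mod int n"
    using arg_cong[OF h, of int] by (simp add: of_nat_mod)
  have "int a mod int n = ((int a + int c) - int c) mod int n" by simp
  also have "\<dots> = ((int a + int c) mod int n - int c) mod int n" by (simp add: mod_diff_left_eq)
  also have "\<dots> = ((int b + int c) mod int n - int c) mod int n" by (simp only: hi)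
  also have "\<dots> = int b mod int n" by (simp add: mod_diff_left_eq)
  finally have "int a mod int n = int b mod int n" .
  thus ?thesis using a b by simp
qed

lemma latin_exists:
  "\<exists>q :: 'n::finite \<Rightarrow> 'n \<Rightarrow> 'n. (\<forall>k. bij (q k)) \<and> (\<forall>j. bij (\<lambda>k. q k j))"
proof -
  define n where "n = CARD('n)"
  obtain e :: "'n \<Rightarrow> nat" where e: "bij_betw e UNIV {..<n}"
    using finite_same_card_bij[of "UNIV :: 'n set" "{..<n}"] unfolding n_def by auto
  define ei where "ei = inv_into UNIV e"
  have eiinj: "inj_on ei {..<n}" using bij_betw_inv_into[OF e] unfolding ei_def bij_betw_def by auto
  have elt: "e j < n" for j using e unfolding bij_betw_def by auto
  have einj: "inj e" using e unfolding bij_betw_def by auto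
  have npos: "n > 0" unfolding n_def by simp
  define q where "q k j = ei ((e j + e k) mod n)" for k j
  have injq: "inj (\<lambda>j. q k j)" for k
  proof
    fix j j' assume "q k j = q k j'"
    hence "(e j + e k) mod n = (e j' + e k) mod n"
      using eiinj npos unfolding q_def inj_on_def by auto
    hence "e j = e j'" using mod_cancel_lt elt by blast
    thus "j = j'" using einj unfolding inj_def by blast
  qed
  have injq2: "inj (\<lambda>k. q k j)" for j
  proof
    fix k k' assume "q k j = q k' j"
    hence "(e k + e j) mod n = (e k' + e j) mod n"
      using eiinj npos unfolding q_def inj_on_def by (auto simp: add.commute)
    hence "e k = e k'" using mod_cancel_lt elt by blast
    thus "k = k'" using einj unfolding inj_def by blast
  qed
  have "bij (q k)" for k using injq[of k] finite_UNIV_inj_surj[of "q k"]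
    by (simp add: bij_def) 
  moreover have "bij (\<lambda>k. q k j)" for j using injq2[of j] finite_UNIV_inj_surj[of "\<lambda>k. q k j"]
    by (simp add: bij_def)
  ultimately show ?thesis by blast
qed

lemma latin_inv:
  fixes q :: "'n::finite \<Rightarrow> 'n \<Rightarrow> 'n"
  assumes "\<forall>k. bij (q k)" "\<forall>j. bij (\<lambda>k. q k j)"
  shows "bij (\<lambda>k. inv (q k) j)"
proof -
  have "inj (\<lambda>k. inv (q k) j)"
  proof
    fix k l assume eq: "inv (q k) j = inv (q l) j"
    have "q k (inv (q k) j) = j" "q l (inv (q l) j) = j"
      using assms(1) by (simp_all add: bij_is_surj surj_f_inv_f)
    hence "q k (inv (q k) j) = q l (inv (q k) j)" using eq by simp
    thus "k = l" using assms(2) unfolding bij_def inj_def by blast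
  qed
  thus ?thesis using finite_UNIV_inj_surj[of "\<lambda>k. inv (q k) j"] by (simp add: bij_def)
qed

subsection \<open>Integrability\<close>

lemma Ssum_diag_bound:
  fixes G :: "real^'n^'n"
  shows "Ssum (G ** diag_mat d) \<le> (real CARD('n) * (\<Sum>i\<in>UNIV. \<bar>d $ i\<bar>)) * Pbound G"
proof -
  have "Ssum (G ** diag_mat d) \<le> (\<Sum>i\<in>UNIV. \<Sum>k\<in>UNIV. \<bar>(G ** diag_mat d) $ k $ i\<bar>)" by (rule Ssum_le_l1)
  also have "\<dots> \<le> (\<Sum>i\<in>UNIV. \<Sum>k\<in>(UNIV::'n set). Pbound G * \<bar>d $ i\<bar>)"
  proof (intro sum_mono)
    fix i k
    have "\<bar>(G ** diag_mat d) $ k $ i\<bar> = \<bar>G $ k $ i\<bar> * \<bar>d $ i\<bar>" by (simp add: entry_diag_right abs_mult)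
    also have "\<dots> \<le> Pbound G * \<bar>d $ i\<bar>" by (intro mult_right_mono entry_le_Pbound) simp
    finally show "\<bar>(G ** diag_mat d) $ k $ i\<bar> \<le> Pbound G * \<bar>d $ i\<bar>" .
  qed
  also have "\<dots> = (real CARD('n) * (\<Sum>i\<in>UNIV. \<bar>d $ i\<bar>)) * Pbound G"
    by (simp add: sum_distrib_left sum_distrib_right algebra_simps)
  finally show ?thesis .
qed

lemma integrable_Ssum_diag:
  "integrable (gauss_mat :: (real^'n^'n) measure) (\<lambda>G. Ssum (G ** diag_mat d))"
proof (rule Bochner_Integration.integrable_bound)
  show "integrable (gauss_mat :: (real^'n^'n) measure) (\<lambda>G. (real CARD('n) * (\<Sum>i\<in>UNIV. \<bar>d $ i\<bar>)) * Pbound G)"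
    by (intro integrable_mult_right integrable_Pbound)
  show "(\<lambda>G. Ssum (G ** diag_mat d)) \<in> borel_measurable (gauss_mat :: (real^'n^'n) measure)"
    unfolding gauss_density by simp
  show "AE G in gauss_mat. norm (Ssum (G ** diag_mat d)) \<le> norm ((real CARD('n) * (\<Sum>i\<in>UNIV. \<bar>d $ i\<bar>)) * Pbound (G :: real^'n^'n))"
  proof (intro AE_I2)
    fix G :: "real^'n^'n"
    have "0 \<le> (real CARD('n) * (\<Sum>i\<in>UNIV. \<bar>d $ i\<bar>)) * Pbound G"
      using one_le_Pbound[of G] by (intro mult_nonneg_nonneg sum_nonneg) auto
    thus "norm (Ssum (G ** diag_mat d)) \<le> norm ((real CARD('n) * (\<Sum>i\<in>UNIV. \<bar>d $ i\<bar>)) * Pbound G)"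
      using Ssum_nonneg[of "G ** diag_mat d"] Ssum_diag_bound[of G d] by simp
  qed
qed

lemma main_ineq:
  fixes d :: "real^'n"
  assumes dn: "(\<Sum>j\<in>UNIV. (d $ j)\<^sup>2) = real CARD('n)"
  shows "(\<integral>G. Ssum (G ** diag_mat d) \<partial>(gauss_mat :: (real^'n^'n) measure)) \<le> (\<integral>G. Ssum G \<partial>(gauss_mat :: (real^'n^'n) measure))"
proof -
  obtain q :: "'n \<Rightarrow> 'n \<Rightarrow> 'n" where q: "\<forall>k. bij (q k)" "\<forall>j. bij (\<lambda>k. q k j)"
    using latin_exists by blast
  define r where "r k j = inv (q k) j" for k j
  have r: "bij_betw (\<lambda>k. r k j) UNIV UNIV" for j unfolding r_def using latin_inv[OF q] by simp
  define dk where "dk k = (\<chi> m. d $ (r k m))" for k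
  have eqk: "(\<integral>G. Ssum (G ** diag_mat d) \<partial>gauss_mat) = (\<integral>G. Ssum (G ** diag_mat (dk k)) \<partial>(gauss_mat :: (real^'n^'n) measure))" for k
  proof -
    have "(\<integral>G. Ssum (G ** diag_mat d) \<partial>(gauss_mat :: (real^'n^'n) measure)) = (\<integral>G. Ssum (permc (q k) G ** diag_mat d) \<partial>gauss_mat)"
      by (rule gauss_inv[OF q(1)[rule_format], symmetric]) simp
    also have "\<dots> = (\<integral>G. Ssum (G ** diag_mat (dk k)) \<partial>gauss_mat)"
      by (simp add: Ssum_permc_diag[OF q(1)[rule_format]] dk_def r_def)
    finally show ?thesis .
  qed
  have "real CARD('n) * (\<integral>G. Ssum (G ** diag_mat d) \<partial>(gauss_mat :: (real^'n^'n) measure))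
      = (\<Sum>k\<in>UNIV. \<integral>G. Ssum (G ** diag_mat (dk k)) \<partial>(gauss_mat :: (real^'n^'n) measure))"
    by (simp add: eqk[symmetric])
  also have "\<dots> = (\<integral>G. (\<Sum>k\<in>UNIV. Ssum (G ** diag_mat (dk k))) \<partial>gauss_mat)"
    by (rule Bochner_Integration.integral_sum[symmetric]) (rule integrable_Ssum_diag)
  also have "\<dots> \<le> (\<integral>G. real CARD('n) * Ssum G \<partial>(gauss_mat :: (real^'n^'n) measure))"
  proof (rule Bochner_Integration.integral_mono)
    show "integrable (gauss_mat :: (real^'n^'n) measure) (\<lambda>G. \<Sum>k\<in>UNIV. Ssum (G ** diag_mat (dk k)))"
      by (intro Bochner_Integration.integrable_sum integrable_Ssum_diag)
    have "integrable (gauss_mat :: (real^'n^'n) measure) (\<lambda>G. Ssum (G ** diag_mat (\<chi> i. 1)))"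
      by (rule integrable_Ssum_diag)
    moreover have "G ** diag_mat (\<chi> i. 1) = G" for G :: "real^'n^'n"
      by (simp add: vec_eq_iff entry_diag_right)
    ultimately have "integrable (gauss_mat :: (real^'n^'n) measure) Ssum" by simp
    thus "integrable (gauss_mat :: (real^'n^'n) measure) (\<lambda>G. real CARD('n) * Ssum G)"
      by (rule integrable_mult_right)
    fix G :: "real^'n^'n"
    show "(\<Sum>k\<in>UNIV. Ssum (G ** diag_mat (dk k))) \<le> real CARD('n) * Ssum G"
      using averaging[of "UNIV :: 'n set" r d G] r dn unfolding dk_def by simp
  qed
  also have "\<dots> = real CARD('n) * (\<integral>G. Ssum G \<partial>(gauss_mat :: (real^'n^'n) measure))" by simp
  finally show ?thesis by simp
qed

theorem theorem6:
  "alpha_R_star TYPE('n::finite) = alpha_R TYPE('n)"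
proof -
  define F where "F D = (\<integral>G. (1 / real CARD('n)) * (\<Sum>k=1..CARD('n). sigma (G :: real^'n^'n) k) \<partial>gauss_mat)" for D :: "real^'n^'n"
  let ?F = "\<lambda>D :: real^'n^'n. (\<integral>G. (1 / real CARD('n)) * (\<Sum>k=1..CARD('n). sigma (G ** D) k) \<partial>(gauss_mat :: (real^'n^'n) measure))"
  have Fe: "?F D = (1 / real CARD('n)) * (\<integral>G. Ssum (G ** D) \<partial>(gauss_mat :: (real^'n^'n) measure))" for D
    by (simp add: Ssum_def)
  have adm1: "admissible_D (mat 1 :: real^'n^'n)"
  proof -
    have "(\<Sum>j\<in>UNIV. ((mat 1 :: real^'n^'n) $ i $ j)\<^sup>2) = 1" for i
    proof -
      have "(\<Sum>j\<in>UNIV. ((mat 1 :: real^'n^'n) $ i $ j)\<^sup>2) = (\<Sum>j\<in>UNIV. if i = j then 1 else 0)"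
        by (intro sum.cong) (auto simp: mat_def)
      thus ?thesis by simp
    qed
    thus ?thesis unfolding admissible_D_def by (simp add: mat_def)
  qed
  have F1: "?F (mat 1) = alpha_R TYPE('n)" by (simp add: alpha_R_def)
  have le: "?F D \<le> ?F (mat 1)" if "admissible_D D" for D :: "real^'n^'n"
  proof -
    define d where "d = (\<chi> i. D $ i $ i)"
    have Dd: "D = diag_mat d" using that unfolding admissible_D_def d_def diag_mat_def
      by (auto simp: vec_eq_iff)
    have "(\<Sum>i\<in>UNIV. \<Sum>j\<in>UNIV. (D $ i $ j)\<^sup>2) = real CARD('n)" using that unfolding admissible_D_def by simp
    moreover have "(\<Sum>j\<in>UNIV. (D $ i $ j)\<^sup>2) = (d $ i)\<^sup>2" for i
    proof -
      have "(\<Sum>j\<in>UNIV. (D $ i $ j)\<^sup>2) = (\<Sum>j\<in>UNIV. if i = j then (d $ i)\<^sup>2 else 0)"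
        by (intro sum.cong) (auto simp: Dd diag_mat_def)
      thus ?thesis by simp
    qed
    ultimately have dn: "(\<Sum>i\<in>UNIV. (d $ i)\<^sup>2) = real CARD('n)" by simp
    have "(\<integral>G. Ssum (G ** D) \<partial>(gauss_mat :: (real^'n^'n) measure)) \<le> (\<integral>G. Ssum (G ** mat 1) \<partial>(gauss_mat :: (real^'n^'n) measure))"
      using main_ineq[OF dn] by (simp add: Dd)
    thus ?thesis unfolding Fe by (intro mult_left_mono) auto
  qed
  have "alpha_R_star TYPE('n) = (GREATEST v. \<exists>D :: real^'n^'n. admissible_D D \<and> v = ?F D)"
    by (simp add: alpha_R_star_def)
  also have "\<dots> = ?F (mat 1)"
  proof (rule Greatest_equality)
    show "\<exists>D :: real^'n^'n. admissible_D D \<and> ?F (mat 1) = ?F D" using adm1 by blast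
    fix y assume "\<exists>D :: real^'n^'n. admissible_D D \<and> y = ?F D"
    thus "y \<le> ?F (mat 1)" using le by blast
  qed
  finally show ?thesis using F1 by simp
qed

end
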